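(* Let $u$ be the entropy solution of $\partial_t u+\nabla\cdot\mathbf{f}(u)=\sum_{i,j}\partial^2_{x_ix_j}\mathbf{A}_{ij}(u)$ on $(0,\infty)\times\mathcal{G}_d$ with $u(0,\cdot)=u_0\in L^\infty(\mathcal{G}_d)$. Then for all $0\le t_1\le t_2$, $$\int_{\mathcal{G}_d}|u(t_2,\omega)|^2\,d\mathfrak{m}(\omega)\le\int_{\mathcal{G}_d}|u(t_1,\omega)|^2\,d\mathfrak{m}(\omega).$$
   Context: Standing setting: $\mathbf{f}:\mathbb{R}\to\mathbb{R}^d$ smooth; $\mathbf{A}(u)=(\mathbf{A}_{ij}(u))$ smooth symmetric with derivative $A(u)=(a_{ij}(u))$ nonnegative definite; smooth $\sigma_{ik}$ with $a_{ij}=\sum_k\sigma_{ik}\sigma_{jk}$; $\beta_{ik}(u)=\int^u\sigma_{ik}$. $\mathcal{G}_d$ is the Bohr compactification of $\mathbb{R}^d$ (compact abelian group containing $\mathbb{R}^d$ densely; $C(\mathcal{G}_d)\cong\mathrm{AP}(\mathbb{R}^d)$), with normalized Haar measure $\mathfrak{m}$. Partial derivatives on $\mathcal{G}_d$: $\partial_{x_i}f(\omega)=\lim_{h\to0}(f(\omega+he_i)-f(\omega))/h$, $e_i\in\mathbb{R}^d\subset\mathcal{G}_d$; distributions on $(0,\infty)\times\mathcal{G}_d$ are defined via integration by parts against compactly supported test functions with all such iterated derivatives continuous. The entropy solution (exists and is unique; it is continuous in $t$ with values in $L^1(\mathcal{G}_d)$) is the $u\in L^\infty((0,\infty)\times\mathcal{G}_d)$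 with: (i) $\sum_i\partial_{x_i}\beta_{ik}(u)\in L^2((0,\infty)\times\mathcal{G}_d)$; (ii) for $\psi\in C(\mathbb{R})$, $\sum_i\partial_{x_i}\beta^\psi_{ik}(u)=\psi(u)\sum_i\partial_{x_i}\beta_{ik}(u)$, $(\beta^\psi_{ik})'=\psi\beta'_{ik}$; (iii) for every convex $C^2$ $\eta$, with $\mathbf{q}'=\eta'\mathbf{f}'$, $r'_{ij}=\eta'a_{ij}$: $\partial_t\eta(u)+\nabla_x\cdot\mathbf{q}(u)-\sum\partial^2_{x_ix_j}r_{ij}(u)\le-\eta''(u)\sum_k(\sum_i\partial_{x_i}\beta_{ik}(u))^2$ in distributions; (iv) $\int_{\mathcal{G}_d}|u(t)-u_0|d\mathfrak{m}\to0$ as $t\to0^+$. *)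

theory Defs
  imports "HOL-Analysis.Analysis" "HOL-Probability.Probability"
begin

text \<open>Concrete model: the Bohr compactification of R^'n is the Pontryagin dual of the
  discrete group R^'n, i.e. the group of all (not necessarily continuous) characters
  chi : R^'n -> S^1, with pointwise multiplication as group law and the topology of
  pointwise convergence.\<close>

typedef ('n::finite) bohr =
  "{c. (\<forall>a b. (c :: real^'n \<Rightarrow> complex) (a + b) = c a * c b) \<and> (\<forall>a. cmod (c a) = 1)}"
  morphisms chr Abs_bohr
  by (rule exI[of _ "\<lambda>_. 1"]) simp

text \<open>Group law (written additively in the paper).\<close>
definition bohr_add :: "('n::finite) bohr \<Rightarrow> 'n bohr \<Rightarrow> 'n bohr" where
  "bohr_add \<omega> \<omega>' = Abs_bohr (\<lambda>\<xi>. chr \<omega> \<xi> * chr \<omega>' \<xi>)"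

definition bohr_emb :: "real^('n::finite) \<Rightarrow> 'n bohr" where
  "bohr_emb x = Abs_bohr (\<lambda>\<xi>. cis (\<xi> \<bullet> x))"

text \<open>Topology of the Bohr compactification (pointwise convergence of characters).\<close>
definition bohr_top :: "('n::finite) bohr topology" where
  "bohr_top = pullback_topology UNIV chr euclidean"

text \<open>Baire sigma-algebra: generated by the continuous functions, equivalently by the
  evaluation maps omega |-> chr omega xi.\<close>
definition bohr_sets :: "('n::finite) bohr set set" where
  "bohr_sets = sigma_sets UNIV {(\<lambda>\<omega>. chr \<omega> \<xi>) -` B | \<xi> B. B \<in> sets (borel :: complex measure)}"

definition bohr_haar :: "('n::finite) bohr measure \<Rightarrow> bool" where
  "bohr_haar M \<longleftrightarrow> space M = UNIV \<and> sets M = bohr_sets \<and> prob_space M \<and>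
     (\<forall>z A. A \<in> sets M \<longrightarrow> emeasure M ((\<lambda>\<omega>. bohr_add \<omega> z) -` A) = emeasure M A)"

text \<open>A direction of differentiation: None = time, Some i = x_i.\<close>
definition dir_fun :: "('n::finite) option \<Rightarrow> (real \<Rightarrow> 'n bohr \<Rightarrow> real) \<Rightarrow> real \<Rightarrow> 'n bohr \<Rightarrow> (real \<Rightarrow> real)" where
  "dir_fun d \<phi> t \<omega> = (case d of
      None \<Rightarrow> (\<lambda>s. \<phi> (t + s) \<omega>)
    | Some i \<Rightarrow> (\<lambda>h. \<phi> t (bohr_add \<omega> (bohr_emb (h *\<^sub>R axis i 1)))))"

definition pderiv_dir :: "('n::finite) option \<Rightarrow> (real \<Rightarrow> 'n bohr \<Rightarrow> real) \<Rightarrow> real \<Rightarrow> 'n bohr \<Rightarrow> real" where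
  "pderiv_dir d \<phi> t \<omega> = deriv (dir_fun d \<phi> t \<omega>) 0"

fun iter_pderiv :: "('n::finite) option list \<Rightarrow> (real \<Rightarrow> 'n bohr \<Rightarrow> real) \<Rightarrow> real \<Rightarrow> 'n bohr \<Rightarrow> real" where
  "iter_pderiv [] \<phi> = \<phi>"
| "iter_pderiv (d # ds) \<phi> = pderiv_dir d (iter_pderiv ds \<phi>)"

text \<open>Test functions: compactly supported in (0,oo) x G_d (G_d is compact, so this means
  support in [a,b] x G_d with 0 < a), all iterated partial derivatives (in t and the x_i)
  exist everywhere and are continuous.\<close>
definition test_fun :: "(real \<Rightarrow> ('n::finite) bohr \<Rightarrow> real) \<Rightarrow> bool" where
  "test_fun \<phi> \<longleftrightarrow>
     (\<exists>a b. 0 < a \<and> (\<forall>t \<omega>. \<phi> t \<omega> \<noteq> 0 \<longrightarrow> a \<le> t \<and> t \<le> b)) \<and>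
     (\<forall>ds. continuous_map (prod_topology euclideanreal bohr_top) euclideanreal
              (\<lambda>(t, \<omega>). iter_pderiv ds \<phi> t \<omega>) \<and>
           (\<forall>d t \<omega>. dir_fun d (iter_pderiv ds \<phi>) t \<omega> differentiable (at 0)))"

definition ST :: "('n::finite) bohr measure \<Rightarrow> (real \<times> 'n bohr) measure" where
  "ST M = restrict_space lborel {0<..} \<Otimes>\<^sub>M M"

definition smooth_real :: "(real \<Rightarrow> real) \<Rightarrow> bool" where
  "smooth_real g \<longleftrightarrow> (\<forall>n x. ((deriv ^^ n) g) differentiable (at x))"

definition entropy_solution ::
  "('n::finite) bohr measure \<Rightarrow> ('n \<Rightarrow> real \<Rightarrow> real) \<Rightarrow> ('n \<Rightarrow> 'n \<Rightarrow> real \<Rightarrow> real) \<Rightarrow>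
   ('n \<Rightarrow> 'k::finite \<Rightarrow> real \<Rightarrow> real) \<Rightarrow> ('n bohr \<Rightarrow> real) \<Rightarrow> (real \<Rightarrow> 'n bohr \<Rightarrow> real) \<Rightarrow> bool"
  where
  "entropy_solution M f A \<sigma> u0 u \<longleftrightarrow>
     \<comment> \<open>u in L-infinity((0,oo) x G_d)\<close>
     (\<lambda>(t, \<omega>). u t \<omega>) \<in> borel_measurable (ST M) \<and>
     (\<exists>C. AE p in ST M. \<bar>u (fst p) (snd p)\<bar> \<le> C) \<and>
     (\<exists>g :: 'k \<Rightarrow> real \<Rightarrow> 'n bohr \<Rightarrow> real.
       \<comment> \<open>(i): sum_i d_{x_i} beta_ik(u) = g_k in L^2\<close>
       (\<forall>k. (\<lambda>(t, \<omega>). g k t \<omega>) \<in> borel_measurable (ST M) \<and>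
            integrable (ST M) (\<lambda>(t, \<omega>). (g k t \<omega>)\<^sup>2)) \<and>
       \<comment> \<open>(ii) chain rule, for every continuous psi and every primitive beta^psi_ik of psi sigma_ik
           (psi = 1 gives the defining identity of g_k in (i))\<close>
       (\<forall>(\<psi> :: real \<Rightarrow> real) (B :: 'n \<Rightarrow> 'k \<Rightarrow> real \<Rightarrow> real) k \<phi>.
          continuous_on UNIV \<psi> \<longrightarrow>
          (\<forall>i v. (B i k has_real_derivative \<psi> v * \<sigma> i k v) (at v)) \<longrightarrow>
          test_fun \<phi> \<longrightarrow>
          (\<integral>p. (\<Sum>i\<in>UNIV. B i k (u (fst p) (snd p)) *
                  iter_pderiv [Some i] \<phi> (fst p) (snd p)) \<partial>ST M)
          = - (\<integral>p. \<psi> (u (fst p) (snd p)) * g k (fst p) (snd p) * \<phi> (fst p) (snd p) \<partial>ST M)) \<and>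
       \<comment> \<open>(iii) entropy inequalities\<close>
       (\<forall>(\<eta> :: real \<Rightarrow> real) \<eta>1 \<eta>2 (q :: 'n \<Rightarrow> real \<Rightarrow> real) (r :: 'n \<Rightarrow> 'n \<Rightarrow> real \<Rightarrow> real) \<phi>.
          convex_on UNIV \<eta> \<longrightarrow>
          (\<forall>v. (\<eta> has_real_derivative \<eta>1 v) (at v)) \<longrightarrow>
          (\<forall>v. (\<eta>1 has_real_derivative \<eta>2 v) (at v)) \<longrightarrow>
          continuous_on UNIV \<eta>2 \<longrightarrow>
          (\<forall>i v. (q i has_real_derivative \<eta>1 v * deriv (f i) v) (at v)) \<longrightarrow>
          (\<forall>i j v. (r i j has_real_derivative \<eta>1 v * deriv (A i j) v) (at v)) \<longrightarrow>
          test_fun \<phi> \<longrightarrow> (\<forall>t \<omega>. 0 \<le> \<phi> t \<omega>) \<longrightarrow>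
          0 \<le> (\<integral>p. (let t = fst p; \<omega> = snd p; w = u t \<omega> in
                   \<eta> w * iter_pderiv [None] \<phi> t \<omega>
                 + (\<Sum>i\<in>UNIV. q i w * iter_pderiv [Some i] \<phi> t \<omega>)
                 + (\<Sum>i\<in>UNIV. \<Sum>j\<in>UNIV. r i j w * iter_pderiv [Some i, Some j] \<phi> t \<omega>)
                 - \<eta>2 w * (\<Sum>k\<in>UNIV. (g k t \<omega>)\<^sup>2) * \<phi> t \<omega>) \<partial>ST M))) \<and>
     \<comment> \<open>(iv) initial condition\<close>
     ((\<lambda>t. \<integral>\<omega>. \<bar>u t \<omega> - u0 \<omega>\<bar> \<partial>M) \<longlongrightarrow> 0) (at_right 0)"

end

theory Submission
  imports Defs "HOL-Computational_Algebra.Polynomial"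
begin

definition hfun :: "real \<Rightarrow> real" where
  "hfun x = (if x > 0 then exp (- inverse x) else 0)"

definition Hp :: "real poly \<Rightarrow> real \<Rightarrow> real" where
  "Hp P x = (if x > 0 then poly P (inverse x) * exp (- inverse x) else 0)"

lemma polyexp_tendsto: "((\<lambda>z. poly Q z * exp (- z)) \<longlongrightarrow> (0::real)) at_top"
proof -
  have "((\<lambda>z. \<Sum>i\<le>degree Q. coeff Q i * (z ^ i / exp z)) \<longlongrightarrow> (0::real)) at_top"
    by (intro tendsto_null_sum tendsto_mult_right_zero tendsto_power_div_exp_0)
  moreover have "(\<lambda>z. \<Sum>i\<le>degree Q. coeff Q i * (z ^ i / exp z)) = (\<lambda>z. poly Q z * exp (- z))"
    by (auto simp: poly_altdef sum_divide_distrib exp_minus field_simps)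
  ultimately show ?thesis by simp
qed

lemma Hp_deriv: "(Hp P has_real_derivative Hp ([:0,0,1:] * (P - pderiv P)) x) (at x)"
proof (cases "x > 0")
  case True
  have d: "((\<lambda>y. poly P (inverse y) * exp (- inverse y)) has_real_derivative
      poly (pderiv P) (inverse x) * (- (inverse x ^ 2)) * exp (- inverse x) + poly P (inverse x) * (exp (- inverse x) * (inverse x ^ 2))) (at x)"
    using True
    by (auto intro!: derivative_eq_intros DERIV_chain2[OF poly_DERIV] simp: power2_eq_square)
  have "poly (pderiv P) (inverse x) * (- (inverse x ^ 2)) * exp (- inverse x) + poly P (inverse x) * (exp (- inverse x) * (inverse x ^ 2))
     = Hp ([:0,0,1:] * (P - pderiv P)) x"
    using True by (simp add: Hp_def algebra_simps power2_eq_square)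
  with d have d2: "((\<lambda>y. poly P (inverse y) * exp (- inverse y)) has_real_derivative Hp ([:0,0,1:] * (P - pderiv P)) x) (at x)"
    by simp
  show ?thesis
    by (rule has_field_derivative_transform_within_open[OF d2, of "{0<..}"]) (use True in \<open>auto simp: Hp_def\<close>)
next
  case False
  show ?thesis
  proof (cases "x < 0")
    case True
    have "((\<lambda>y. 0) has_real_derivative 0) (at x)" by simp
    then have "(Hp P has_real_derivative 0) (at x)"
      by (rule has_field_derivative_transform_within_open[of _ _ _ "{..<0}"]) (use True in \<open>auto simp: Hp_def\<close>)
    then show ?thesis using True by (simp add: Hp_def)
  next
    case False2: False
    with False have x0: "x = 0" by simp
    have R: "((\<lambda>h. Hp P h / h) \<longlongrightarrow> 0) (at_right 0)"
    proof -
      have "((\<lambda>z. poly (pCons 0 P) z * exp (- z)) \<longlongrightarrow> (0::real)) at_top"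
        by (rule polyexp_tendsto)
      then have "(((\<lambda>h. Hp P h / h) \<circ> inverse) \<longlongrightarrow> 0) at_top"
      proof (rule Lim_transform_eventually)
        show "\<forall>\<^sub>F z in at_top. poly (pCons 0 P) z * exp (- z) = ((\<lambda>h. Hp P h / h) \<circ> inverse) z"
          using eventually_gt_at_top[of "0::real"]
          by eventually_elim (auto simp: Hp_def field_simps)
      qed
      then show ?thesis
        by (simp add: at_right_to_top filterlim_filtermap o_def)
    qed
    have L: "((\<lambda>h. Hp P h / h) \<longlongrightarrow> 0) (at_left 0)"
    proof -
      have "\<forall>\<^sub>F h in at_left (0::real). 0 = Hp P h / h"
        by (auto simp: eventually_at_left_field Hp_def intro!: exI[of _ "-1"])
      then show ?thesis by (rule Lim_transform_eventually[OF tendsto_const])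
    qed
    have "((\<lambda>h. (Hp P (0 + h) - Hp P 0) / h) \<longlongrightarrow> 0) (at 0)"
      using R L by (simp add: filterlim_at_split Hp_def)
    then show ?thesis
      using x0 by (simp add: DERIV_def Hp_def)
  qed
qed

lemma smooth_deriv: "smooth_real f \<Longrightarrow> smooth_real (deriv f)"
  unfolding smooth_real_def by (metis funpow_Suc_right o_apply)

lemma smooth_diff: "smooth_real f \<Longrightarrow> f differentiable (at x)"
  unfolding smooth_real_def by (metis funpow_0)

lemma smooth_DERIV: "smooth_real f \<Longrightarrow> (f has_real_derivative deriv f x) (at x)"
  using smooth_diff DERIV_deriv_iff_real_differentiable by blast

lemma smooth_cont: "smooth_real f \<Longrightarrow> continuous_on A f"
  by (meson continuous_at_imp_continuous_on differentiable_imp_continuous_within smooth_diff)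

lemma smooth_iff_seq:
  assumes "\<And>n x. (D n has_real_derivative D (Suc n) x) (at x)" "D 0 = f"
  shows "smooth_real f"
proof -
  have "(deriv ^^ n) f = D n" for n
  proof (induction n)
    case 0 then show ?case using assms by simp
  next
    case (Suc n)
    then show ?case using assms(1) by (auto intro!: ext DERIV_imp_deriv)
  qed
  then show ?thesis unfolding smooth_real_def
    using assms(1) real_differentiable_def by metis
qed

definition Tp :: "real poly \<Rightarrow> real poly" where "Tp P = [:0,0,1:] * (P - pderiv P)"

lemma smooth_Hp: "smooth_real (Hp P)"
proof (rule smooth_iff_seq[where D="\<lambda>n. Hp ((Tp ^^ n) P)"])
  fix n x
  show "(Hp ((Tp ^^ n) P) has_real_derivative Hp ((Tp ^^ Suc n) P) x) (at x)"
    unfolding funpow.simps o_apply by (rule Hp_deriv[folded Tp_def])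
qed simp

lemma hfun_Hp: "hfun = Hp 1"
  by (auto simp: hfun_def Hp_def)

lemma smooth_hfun: "smooth_real hfun"
  unfolding hfun_Hp by (rule smooth_Hp)

lemma deriv_add_gen:
  fixes f g :: "real \<Rightarrow> real"
  assumes "\<And>k x. k < m \<Longrightarrow> (deriv ^^ k) f differentiable (at x)"
    and "\<And>k x. k < m \<Longrightarrow> (deriv ^^ k) g differentiable (at x)"
  shows "(deriv ^^ m) (\<lambda>x. f x + g x) = (\<lambda>x. (deriv ^^ m) f x + (deriv ^^ m) g x)"
  using assms
proof (induction m arbitrary: f g)
  case 0 then show ?case by simp
next
  case (Suc m)
  have df: "\<And>x. f differentiable (at x)" and dg: "\<And>x. g differentiable (at x)"
    using Suc.prems[of 0] by auto
  have "deriv (\<lambda>x. f x + g x) = (\<lambda>x. deriv f x + deriv g x)"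
  proof -
    have "\<And>x. (f has_real_derivative deriv f x) (at x)" "\<And>x. (g has_real_derivative deriv g x) (at x)"
      using df dg DERIV_deriv_iff_real_differentiable by blast+
    then show ?thesis by (auto intro!: ext DERIV_imp_deriv derivative_eq_intros)
  qed
  moreover have "(deriv ^^ m) (\<lambda>x. deriv f x + deriv g x) = (\<lambda>x. (deriv ^^ m) (deriv f) x + (deriv ^^ m) (deriv g) x)"
  proof (rule Suc.IH)
    have e: "(deriv ^^ k) (deriv h) = (deriv ^^ Suc k) h" for k and h :: "real \<Rightarrow> real"
      by (simp only: funpow_Suc_right o_apply)
    show "(deriv ^^ k) (deriv f) differentiable (at x)" "(deriv ^^ k) (deriv g) differentiable (at x)"
      if "k < m" for k x using Suc.prems[of "Suc k" x] that unfolding e by auto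
  qed
  ultimately show ?case by (simp add: funpow_Suc_right del: funpow.simps)
qed

lemma smooth_add: "smooth_real f \<Longrightarrow> smooth_real g \<Longrightarrow> smooth_real (\<lambda>x. f x + g x)"
  unfolding smooth_real_def by (subst deriv_add_gen) (auto intro!: derivative_intros)

lemma deriv_cmult_gen:
  assumes "smooth_real f"
  shows "(deriv ^^ m) (\<lambda>x. c * f x) = (\<lambda>x. c * (deriv ^^ m) f x)"
  using assms
proof (induction m arbitrary: f)
  case 0 then show ?case by simp
next
  case (Suc m)
  have "deriv (\<lambda>x. c * f x) = (\<lambda>x. c * deriv f x)"
    using Suc.prems by (auto intro!: ext DERIV_imp_deriv derivative_eq_intros smooth_DERIV)
  then show ?case using Suc.IH[OF smooth_deriv[OF Suc.prems]]
    by (simp add: funpow_Suc_right del: funpow.simps)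
qed

lemma smooth_cmult: "smooth_real f \<Longrightarrow> smooth_real (\<lambda>x. c * f x)"
  unfolding smooth_real_def by (subst deriv_cmult_gen) (auto simp: smooth_real_def)

lemma smooth_const: "smooth_real (\<lambda>x. c)"
  by (rule smooth_iff_seq[where D="\<lambda>n x. if n = 0 then c else 0"]) auto

lemma smooth_minus: "smooth_real f \<Longrightarrow> smooth_real g \<Longrightarrow> smooth_real (\<lambda>x. f x - g x)"
  using smooth_add[of f "\<lambda>x. (-1) * g x"] smooth_cmult[of g "-1"] by simp

lemma deriv_affine_gen:
  assumes "smooth_real f"
  shows "(deriv ^^ m) (\<lambda>x. f (a * x + b)) = (\<lambda>x. a ^ m * (deriv ^^ m) f (a * x + b))"
proof (induction m)
  case 0 then show ?case by simp
next
  case (Suc m)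
  have "deriv (\<lambda>x. a ^ m * (deriv ^^ m) f (a * x + b)) = (\<lambda>x. a ^ Suc m * (deriv ^^ Suc m) f (a * x + b))"
  proof (rule ext, rule DERIV_imp_deriv)
    fix x
    have sm: "smooth_real ((deriv ^^ m) f)"
      using assms unfolding smooth_real_def by (metis funpow_add o_apply)
    have "((\<lambda>x. a*x+b) has_real_derivative a) (at x)" by (auto intro!: derivative_eq_intros)
    from DERIV_chain2[OF smooth_DERIV[OF sm] this]
    have "((\<lambda>x. (deriv ^^ m) f (a * x + b)) has_real_derivative deriv ((deriv ^^ m) f) (a * x + b) * a) (at x)" .
    then have "((\<lambda>x. a ^ m * (deriv ^^ m) f (a * x + b)) has_real_derivative a ^ m * (deriv ((deriv ^^ m) f) (a * x + b) * a)) (at x)"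
      by (rule DERIV_cmult)
    then show "((\<lambda>x. a ^ m * (deriv ^^ m) f (a * x + b)) has_real_derivative a ^ Suc m * (deriv ^^ Suc m) f (a * x + b)) (at x)"
      by (simp add: algebra_simps)
  qed
  then show ?case using Suc.IH by simp
qed

lemma smooth_affine: "smooth_real f \<Longrightarrow> smooth_real (\<lambda>x. f (a * x + b))"
  unfolding smooth_real_def
proof (intro allI)
  fix n x
  assume s: "\<forall>n x. (deriv ^^ n) f differentiable at x"
  then have "(deriv ^^ n) f differentiable (at (a*x+b))" by blast
  then have "(\<lambda>x. (deriv ^^ n) f (a*x+b)) differentiable (at x)"
    by (rule differentiable_compose) (auto intro!: derivative_intros)
  then have "(\<lambda>x. a ^ n * (deriv ^^ n) f (a*x+b)) differentiable (at x)"
    by (auto intro!: derivative_intros)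
  then show "(deriv ^^ n) (\<lambda>x. f (a * x + b)) differentiable (at x)"
    using deriv_affine_gen[of f n a b] s unfolding smooth_real_def by simp
qed

lemma smooth_mult_aux:
  "\<forall>f g. smooth_real f \<longrightarrow> smooth_real g \<longrightarrow> (\<forall>x. (deriv ^^ n) (\<lambda>x. f x * g x) differentiable (at x))"
proof (induction n rule: less_induct)
  case (less n)
  show ?case
  proof (intro allI impI)
    fix f g x
    assume sf: "smooth_real f" and sg: "smooth_real g"
    show "(deriv ^^ n) (\<lambda>x. f x * g x) differentiable (at x)"
    proof (cases n)
      case 0
      have "(\<lambda>x. f x * g x) differentiable (at x)"
        using smooth_diff[OF sf] smooth_diff[OF sg] by (rule differentiable_mult)
      with 0 show ?thesis by simp
    next
      case (Suc m)
      have "deriv (\<lambda>x. f x * g x) = (\<lambda>x. deriv f x * g x + f x * deriv g x)"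
        using sf sg by (auto intro!: ext DERIV_imp_deriv derivative_eq_intros smooth_DERIV)
      moreover have "(deriv ^^ m) (\<lambda>x. deriv f x * g x + f x * deriv g x)
          = (\<lambda>x. (deriv ^^ m) (\<lambda>x. deriv f x * g x) x + (deriv ^^ m) (\<lambda>x. f x * deriv g x) x)"
        by (rule deriv_add_gen) (use less Suc sf sg smooth_deriv in auto)
      moreover have "(\<lambda>x. (deriv ^^ m) (\<lambda>x. deriv f x * g x) x + (deriv ^^ m) (\<lambda>x. f x * deriv g x) x) differentiable (at x)"
        using less[of m] Suc sf sg smooth_deriv by (auto intro!: derivative_intros)
      ultimately show ?thesis using Suc by (simp add: funpow_Suc_right del: funpow.simps)
    qed
  qed
qed

lemma smooth_mult: "smooth_real f \<Longrightarrow> smooth_real g \<Longrightarrow> smooth_real (\<lambda>x. f x * g x)"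
  using smooth_mult_aux unfolding smooth_real_def by blast

lemma smooth_antideriv:
  assumes "\<And>x. (F has_real_derivative g x) (at x)" "smooth_real g"
  shows "smooth_real F"
proof -
  have "deriv F = g" using assms(1) by (auto intro!: ext DERIV_imp_deriv)
  then have e: "(deriv ^^ Suc n) F = (deriv ^^ n) g" for n
    by (simp only: funpow_Suc_right o_apply)
  show ?thesis unfolding smooth_real_def
  proof (intro allI)
    fix n x show "(deriv ^^ n) F differentiable (at x)"
    proof (cases n)
      case 0 then show ?thesis using assms(1) real_differentiable_def by auto
    next
      case (Suc m) then show ?thesis using e assms(2) smooth_real_def by metis
    qed
  qed
qed

lemma deriv_integral_at:
  fixes g :: "real \<Rightarrow> real" and a b x :: real
  assumes cg: "continuous_on UNIV g" and xin: "x \<in> {a<..<b}"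
  shows "((\<lambda>y. integral {a..y} g) has_real_derivative g x) (at x)"
proof -
  have "((\<lambda>y. integral {a..y} g) has_real_derivative g x) (at x within {a..b})"
    apply (rule integral_has_real_derivative)
    using xin continuous_on_subset[OF cg subset_UNIV] apply simp
    using xin apply simp
    done
  then have "((\<lambda>y. integral {a..y} g) has_real_derivative g x) (at x within {a<..<b})"
    by (rule DERIV_subset) (simp add: subset_iff)
  moreover have "at x within {a<..<b} = at x"
    using xin by (intro at_within_open) auto
  ultimately show ?thesis by simp
qed
lemma integral_split_G:
  fixes g :: "real \<Rightarrow> real" and a b y :: real
  assumes cg: "continuous_on UNIV g" and "a \<le> 0" "a \<le> y"
  shows "integral {0..y} g - integral {y..0} g = integral {a..y} g - integral {a..0} g"
proof -
  have int: "g integrable_on {a..max 0 y}"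
    by (rule integrable_continuous_interval) (rule continuous_on_subset[OF cg subset_UNIV])
  have s1: "{a..y} \<subseteq> {a..max 0 y}" and s2: "{a..0} \<subseteq> {a..max 0 y}" by auto
  have i1: "g integrable_on {a..y}" "g integrable_on {a..0}"
    using integrable_subinterval_real[OF int s1] integrable_subinterval_real[OF int s2] by auto
  show ?thesis
  proof (cases "0 \<le> y")
    case True
    have c: "integral {a..0} g + integral {0..y} g = integral {a..y} g"
      using Henstock_Kurzweil_Integration.integral_combine[OF \<open>a \<le> 0\<close> True i1(1)] .
    have z: "integral {y..0} g = 0"
    proof (cases "y = 0")
      case True then show ?thesis by simp
    next
      case False then have "{y..0} = {}" using \<open>0 \<le> y\<close> by auto
      then show ?thesis by simp
    qed
    from c z show ?thesis by simp
  next
    case False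
    have c: "integral {a..y} g + integral {y..0} g = integral {a..0} g"
      using Henstock_Kurzweil_Integration.integral_combine[OF \<open>a \<le> y\<close> _ i1(2)] False by simp
    have "{0..y} = {}" using False by auto
    then have z: "integral {0..y} g = 0" by simp
    from c z show ?thesis by simp
  qed
qed

lemma antideriv_exists:
  fixes g :: "real \<Rightarrow> real"
  assumes cg: "continuous_on UNIV g"
  shows "\<exists>G. \<forall>x. (G has_real_derivative g x) (at x)"
proof -
  define G where "G x = integral {0..x} g - integral {x..0} g" for x
  have "(G has_real_derivative g x) (at x)" for x :: real
  proof -
  define a where "a = min 0 x - 1"
  have xin: "x \<in> {a<..<x+1}" by (auto simp: a_def)
  have eq: "integral {a..y} g - integral {a..0} g = G y" if "y \<in> {a<..<x+1}" for y
    unfolding G_def using integral_split_G[OF cg, of a y] that by (simp add: a_def)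
  have "((\<lambda>y. integral {a..y} g - integral {a..0} g) has_real_derivative g x - 0) (at x)"
    by (rule DERIV_diff[OF deriv_integral_at[OF cg xin] DERIV_const])
  then have "((\<lambda>y. integral {a..y} g - integral {a..0} g) has_real_derivative g x) (at x)" by simp
  then show "(G has_real_derivative g x) (at x)"
    by (rule has_field_derivative_transform_within_open[of _ _ _ "{a<..<x+1}"]) (use xin eq in simp_all)
  qed
  then show ?thesis by blast
qed

definition bump :: "real \<Rightarrow> real" where "bump x = hfun x * hfun (1 - x)"

lemma smooth_bump: "smooth_real bump"
proof -
  have "smooth_real (\<lambda>x. hfun ((-1) * x + 1))" by (rule smooth_affine[OF smooth_hfun])
  then show ?thesis unfolding bump_def using smooth_mult[OF smooth_hfun] by simp
qed

lemma hfun_nonneg: "0 \<le> hfun x" by (simp add: hfun_def)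
lemma hfun_pos: "0 < x \<Longrightarrow> 0 < hfun x" by (simp add: hfun_def)
lemma hfun_zero: "x \<le> 0 \<Longrightarrow> hfun x = 0" by (simp add: hfun_def)

lemma bump_nonneg: "0 \<le> bump x" by (simp add: bump_def hfun_nonneg)
lemma bump_pos: "0 < x \<Longrightarrow> x < 1 \<Longrightarrow> 0 < bump x" by (simp add: bump_def hfun_pos)
lemma bump_zero: "x \<le> 0 \<or> 1 \<le> x \<Longrightarrow> bump x = 0" by (auto simp: bump_def hfun_zero)

definition Fb :: "real \<Rightarrow> real" where "Fb = (SOME F. \<forall>x. (F has_real_derivative bump x) (at x))"

lemma Fb_deriv: "(Fb has_real_derivative bump x) (at x)"
proof -
  have "\<exists>F. \<forall>x. (F has_real_derivative bump x) (at x)"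
    by (rule antideriv_exists) (rule smooth_cont[OF smooth_bump])
  from someI_ex[OF this] show ?thesis unfolding Fb_def by blast
qed

lemma Fb_mvt:
  assumes "x < y" obtains z where "x < z" "z < y" "Fb y - Fb x = (y - x) * bump z"
  using MVT2[OF assms, of Fb bump] Fb_deriv by blast

lemma Fb_mono: "x \<le> y \<Longrightarrow> Fb x \<le> Fb y"
proof (cases "x = y")
  case False
  assume "x \<le> y" then have "x < y" using False by simp
  then obtain z where "Fb y - Fb x = (y - x) * bump z" by (rule Fb_mvt)
  moreover have "0 \<le> (y - x) * bump z" using \<open>x < y\<close> bump_nonneg by simp
  ultimately show ?thesis by simp
qed simp

lemma Fb_left: "x \<le> 0 \<Longrightarrow> Fb x = Fb 0"
proof (cases "x = 0")
  case False
  assume "x \<le> 0" then have "x < 0" using False by simp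
  then obtain z where "x < z" "z < 0" "Fb 0 - Fb x = (0 - x) * bump z" by (rule Fb_mvt)
  then show ?thesis using bump_zero[of z] by simp
qed simp

lemma Fb_right: "1 \<le> x \<Longrightarrow> Fb x = Fb 1"
proof (cases "x = 1")
  case False
  assume "1 \<le> x" then have "1 < x" using False by simp
  then obtain z where "1 < z" "z < x" "Fb x - Fb 1 = (x - 1) * bump z" by (rule Fb_mvt)
  then show ?thesis using bump_zero[of z] by simp
qed simp

definition cb :: real where "cb = Fb 1 - Fb 0"

lemma cb_pos: "0 < cb"
proof -
  obtain z where "0 < z" "z < 1" "Fb 1 - Fb 0 = (1 - 0) * bump z" using Fb_mvt[of 0 1] by auto
  then show ?thesis using bump_pos[of z] by (simp add: cb_def)
qed

definition Sf :: "real \<Rightarrow> real" where "Sf x = inverse cb * (Fb x - Fb 0)"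

lemma smooth_Fb: "smooth_real Fb"
  by (rule smooth_antideriv[OF Fb_deriv smooth_bump])

lemma smooth_Sf: "smooth_real Sf"
proof -
  have "smooth_real (\<lambda>x. Fb x - Fb 0)" by (rule smooth_minus[OF smooth_Fb smooth_const])
  from smooth_cmult[OF this, of "inverse cb"] show ?thesis by (simp add: Sf_def[abs_def])
qed

lemma Sf_deriv: "(Sf has_real_derivative inverse cb * bump x) (at x)"
  unfolding Sf_def using DERIV_cmult[OF DERIV_diff[OF Fb_deriv DERIV_const], where c="inverse cb"] by simp

lemma Sf_mono: "x \<le> y \<Longrightarrow> Sf x \<le> Sf y"
proof -
  assume "x \<le> y"
  then have "Fb x - Fb 0 \<le> Fb y - Fb 0" using Fb_mono[of x y] by linarith
  moreover have "0 \<le> inverse cb" using cb_pos by simp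
  ultimately show ?thesis unfolding Sf_def by (rule mult_left_mono)
qed

lemma Sf_left: "x \<le> 0 \<Longrightarrow> Sf x = 0"
  unfolding Sf_def using Fb_left[of x] by simp

lemma Sf_right: "1 \<le> x \<Longrightarrow> Sf x = 1"
  unfolding Sf_def using Fb_right[of x] cb_pos by (simp add: cb_def)

lemma iter_pderiv_time:
  fixes \<theta> :: "real \<Rightarrow> real"
  assumes "smooth_real \<theta>"
  shows "\<exists>G. smooth_real G \<and> iter_pderiv ds (\<lambda>t (\<omega>::'n::finite bohr). \<theta> t) = (\<lambda>t \<omega>. G t)"
proof (induction ds)
  case Nil then show ?case using assms by auto
next
  case (Cons d ds)
  then obtain G where G: "smooth_real G" "iter_pderiv ds (\<lambda>t (\<omega>::'n bohr). \<theta> t) = (\<lambda>t \<omega>. G t)" by blast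
  show ?case
  proof (cases d)
    case None
    have "deriv (\<lambda>s. G (t + s)) 0 = deriv G t" for t
    proof (rule DERIV_imp_deriv)
      have "(G has_real_derivative deriv G t) (at (0 + t))" using smooth_DERIV[OF G(1)] by simp
      then show "((\<lambda>s. G (t + s)) has_real_derivative deriv G t) (at 0)"
        unfolding DERIV_shift by (simp add: add.commute)
    qed
    then have "iter_pderiv (d # ds) (\<lambda>t (\<omega>::'n bohr). \<theta> t) = (\<lambda>t \<omega>. deriv G t)"
      using None G(2) by (auto simp: pderiv_dir_def dir_fun_def intro!: ext)
    then show ?thesis using smooth_deriv[OF G(1)] by blast
  next
    case (Some i)
    then have "iter_pderiv (d # ds) (\<lambda>t (\<omega>::'n bohr). \<theta> t) = (\<lambda>t \<omega>. 0)"
      using G(2) by (auto simp: pderiv_dir_def dir_fun_def intro!: ext)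
    then show ?thesis using smooth_const[of 0] by blast
  qed
qed

lemma test_fun_time:
  fixes \<theta> :: "real \<Rightarrow> real"
  assumes sm: "smooth_real \<theta>" and a: "0 < a" and supp: "\<And>t. \<theta> t \<noteq> 0 \<Longrightarrow> a \<le> t \<and> t \<le> b"
  shows "test_fun (\<lambda>t (\<omega>::'n::finite bohr). \<theta> t)"
  unfolding test_fun_def
proof (intro conjI allI)
  show "\<exists>a b. 0 < a \<and> (\<forall>t (\<omega>::'n bohr). \<theta> t \<noteq> 0 \<longrightarrow> a \<le> t \<and> t \<le> b)"
    using a supp by blast
next
  fix ds :: "'n option list"
  obtain G where G: "smooth_real G" "iter_pderiv ds (\<lambda>t (\<omega>::'n bohr). \<theta> t) = (\<lambda>t \<omega>. G t)"
    using iter_pderiv_time[OF sm] by blast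
  have cG: "continuous_map euclideanreal euclideanreal G"
    using smooth_cont[OF G(1)] by simp
  have "continuous_map (prod_topology euclideanreal bohr_top) euclideanreal (G \<circ> fst)"
    by (rule continuous_map_compose[OF continuous_map_fst cG])
  moreover have "(\<lambda>(t, \<omega>). iter_pderiv ds (\<lambda>t (\<omega>::'n bohr). \<theta> t) t \<omega>) = G \<circ> fst"
    using G(2) by (auto intro!: ext)
  ultimately show "continuous_map (prod_topology euclideanreal bohr_top) euclideanreal
           (\<lambda>(t, \<omega>). iter_pderiv ds (\<lambda>t (\<omega>::'n bohr). \<theta> t) t \<omega>)" by simp
  fix d t \<omega>
  show "dir_fun d (iter_pderiv ds (\<lambda>t (\<omega>::'n bohr). \<theta> t)) t \<omega> differentiable (at 0)"
  proof (cases d)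
    case None
    have "(G has_real_derivative deriv G t) (at (0 + t))" using smooth_DERIV[OF G(1)] by simp
    then have "((\<lambda>s. G (s + t)) has_real_derivative deriv G t) (at 0)"
      unfolding DERIV_shift .
    then have "(\<lambda>s. G (t + s)) differentiable (at 0)"
      by (auto simp: add.commute real_differentiable_def)
    then show ?thesis using None G(2) by (simp add: dir_fun_def)
  next
    case (Some i)
    then show ?thesis using G(2) by (simp add: dir_fun_def)
  qed
qed

definition theta :: "real \<Rightarrow> real \<Rightarrow> real \<Rightarrow> real \<Rightarrow> real" where
  "theta t1 t2 e t = Sf ((t - t1) / e) - Sf ((t - t2 + e) / e)"

definition dtheta :: "real \<Rightarrow> real \<Rightarrow> real \<Rightarrow> real \<Rightarrow> real" where
  "dtheta t1 t2 e t = inverse cb * bump ((t - t1) / e) / e - inverse cb * bump ((t - t2 + e) / e) / e"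

lemma smooth_theta: "e \<noteq> 0 \<Longrightarrow> smooth_real (theta t1 t2 e)"
proof -
  assume "e \<noteq> 0"
  have 1: "smooth_real (\<lambda>t. Sf (inverse e * t + (- t1 / e)))" by (rule smooth_affine[OF smooth_Sf])
  have 2: "smooth_real (\<lambda>t. Sf (inverse e * t + ((e - t2) / e)))" by (rule smooth_affine[OF smooth_Sf])
  have "theta t1 t2 e = (\<lambda>t. Sf (inverse e * t + (- t1 / e)) - Sf (inverse e * t + ((e - t2) / e)))"
    unfolding theta_def using \<open>e \<noteq> 0\<close> by (intro ext) (simp add: divide_inverse algebra_simps)
  then show ?thesis using smooth_minus[OF 1 2] by simp
qed

lemma theta_deriv: "e \<noteq> 0 \<Longrightarrow> (theta t1 t2 e has_real_derivative dtheta t1 t2 e t) (at t)"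
proof -
  assume e: "e \<noteq> 0"
  have a: "((\<lambda>t. (t - t1) / e) has_real_derivative 1 / e) (at t)"
    using e by (auto intro!: derivative_eq_intros)
  have b: "((\<lambda>t. (t - t2 + e) / e) has_real_derivative 1 / e) (at t)"
    using e by (auto intro!: derivative_eq_intros)
  have "((\<lambda>t. Sf ((t - t1) / e) - Sf ((t - t2 + e) / e)) has_real_derivative
        inverse cb * bump ((t - t1) / e) * (1 / e) - inverse cb * bump ((t - t2 + e) / e) * (1/e)) (at t)"
    by (rule DERIV_diff[OF DERIV_chain2[OF Sf_deriv a] DERIV_chain2[OF Sf_deriv b]])
  then show ?thesis unfolding theta_def[abs_def] dtheta_def by simp
qed

lemma theta_nonneg: "0 < e \<Longrightarrow> e \<le> t2 - t1 \<Longrightarrow> 0 \<le> theta t1 t2 e t"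
  unfolding theta_def using Sf_mono[of "(t - t2 + e) / e" "(t - t1) / e"]
  by (simp add: divide_right_mono)

lemma theta_supp: "0 < e \<Longrightarrow> e \<le> t2 - t1 \<Longrightarrow> theta t1 t2 e t \<noteq> 0 \<Longrightarrow> t1 \<le> t \<and> t \<le> t2"
proof (rule ccontr)
  assume e: "0 < e" "e \<le> t2 - t1" and nz: "theta t1 t2 e t \<noteq> 0" and n: "\<not> (t1 \<le> t \<and> t \<le> t2)"
  show False
  proof (cases "t < t1")
    case True
    then have "(t - t1) / e \<le> 0" "(t - t2 + e) / e \<le> 0" using e by (auto simp: divide_le_0_iff)
    then show False using nz Sf_left unfolding theta_def by simp
  next
    case False
    then have "t2 < t" using n by simp
    then have "1 \<le> (t - t1) / e" "1 \<le> (t - t2 + e) / e" using e by (auto simp: le_divide_eq)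
    then show False using nz Sf_right unfolding theta_def by simp
  qed
qed

lemma ftc_real:
  fixes f f' :: "real \<Rightarrow> real"
  assumes "a \<le> b" "\<And>x. (f has_real_derivative f' x) (at x)"
  shows "integral {a..b} f' = f b - f a"
proof -
  have "(f' has_integral (f b - f a)) {a..b}"
    by (rule fundamental_theorem_of_calculus[OF assms(1)])
       (use assms(2) in \<open>auto simp: has_real_derivative_iff_has_vector_derivative intro: has_vector_derivative_at_within\<close>)
  then show ?thesis by (rule integral_unique)
qed

lemma cont_bump: "continuous_on A bump"
  by (rule smooth_cont[OF smooth_bump])

lemma energy_mono_aux:
  fixes E :: "real \<Rightarrow> real"
  assumes cont: "continuous_on {ta..tb} E" and t: "ta < tb"
    and H: "\<And>e. 0 < e \<Longrightarrow> e \<le> tb - ta \<Longrightarrow> 0 \<le> integral {ta..tb} (\<lambda>t. E t * dtheta ta tb e t)"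
  shows "E tb \<le> E ta"
proof (rule ccontr)
  assume "\<not> E tb \<le> E ta"
  define \<delta> where "\<delta> = (E tb - E ta) / 4"
  have \<delta>: "0 < \<delta>" using \<open>\<not> E tb \<le> E ta\<close> by (simp add: \<delta>_def)
  have t1in: "ta \<in> {ta..tb}" and t2in: "tb \<in> {ta..tb}" using t by auto
  obtain d1 where d1: "0 < d1" "\<And>t. t \<in> {ta..tb} \<Longrightarrow> dist t ta < d1 \<Longrightarrow> dist (E t) (E ta) < \<delta>"
    using cont t1in \<delta> unfolding continuous_on_iff by metis
  obtain d2 where d2: "0 < d2" "\<And>t. t \<in> {ta..tb} \<Longrightarrow> dist t tb < d2 \<Longrightarrow> dist (E t) (E tb) < \<delta>"
    using cont t2in \<delta> unfolding continuous_on_iff by metis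
  define e where "e = min (min d1 d2 / 2) (tb - ta)"
  have e: "0 < e" "e \<le> tb - ta" "e < d1" "e < d2" using d1 d2 t by (auto simp: e_def)
  define r1 where "r1 t = inverse cb * bump ((t - ta) / e) / e" for t
  define r2 where "r2 t = inverse cb * bump ((t - tb + e) / e) / e" for t
  have dth: "dtheta ta tb e t = r1 t - r2 t" for t by (simp add: dtheta_def r1_def r2_def)
  have r1_nn: "0 \<le> r1 t" for t using cb_pos e bump_nonneg by (simp add: r1_def)
  have r2_nn: "0 \<le> r2 t" for t using cb_pos e bump_nonneg by (simp add: r2_def)
  have c1: "continuous_on {ta..tb} r1" unfolding r1_def using e
    by (intro continuous_intros continuous_on_compose2[OF cont_bump, of _ "\<lambda>t. (t - ta) / e"]) auto
  have c2: "continuous_on {ta..tb} r2" unfolding r2_def using e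
    by (intro continuous_intros continuous_on_compose2[OF cont_bump, of _ "\<lambda>t. (t - tb + e) / e"]) auto
  have ce: "continuous_on {ta..tb} (\<lambda>t. E t - E s)" for s by (intro continuous_intros cont)
  have int1: "r1 integrable_on {ta..tb}" by (rule integrable_continuous_interval[OF c1])
  have int2: "r2 integrable_on {ta..tb}" by (rule integrable_continuous_interval[OF c2])
  have intc1: "(\<lambda>t. c * r1 t) integrable_on {ta..tb}" for c
    using integrable_on_mult_left[OF int1, of c] by (simp add: mult.commute)
  have intc2: "(\<lambda>t. c * r2 t) integrable_on {ta..tb}" for c
    using integrable_on_mult_left[OF int2, of c] by (simp add: mult.commute)
  have intE1: "(\<lambda>t. (E t - E s) * r1 t) integrable_on {ta..tb}" for s
    by (rule integrable_continuous_interval) (intro continuous_intros c1 cont)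
  have intE2: "(\<lambda>t. (E t - E s) * r2 t) integrable_on {ta..tb}" for s
    by (rule integrable_continuous_interval) (intro continuous_intros c2 cont)
  have I1: "integral {ta..tb} r1 = 1"
  proof -
    have "\<And>x. ((\<lambda>t. Sf ((t - ta) / e)) has_real_derivative r1 x) (at x)"
    proof -
      fix x
      have a: "((\<lambda>t. (t - ta) / e) has_real_derivative 1 / e) (at x)"
        using e by (auto intro!: derivative_eq_intros)
      show "((\<lambda>t. Sf ((t - ta) / e)) has_real_derivative r1 x) (at x)"
        using DERIV_chain2[OF Sf_deriv a] by (simp add: r1_def)
    qed
    from ftc_real[OF _ this, of ta tb] t
    have "integral {ta..tb} r1 = Sf ((tb - ta) / e) - Sf ((ta - ta) / e)" by simp
    moreover have "Sf ((tb - ta) / e) = 1" using e by (intro Sf_right) simp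
    moreover have "Sf ((ta - ta) / e) = 0" by (intro Sf_left) simp
    ultimately show ?thesis by simp
  qed
  have I2: "integral {ta..tb} r2 = 1"
  proof -
    have "\<And>x. ((\<lambda>t. Sf ((t - tb + e) / e)) has_real_derivative r2 x) (at x)"
    proof -
      fix x
      have a: "((\<lambda>t. (t - tb + e) / e) has_real_derivative 1 / e) (at x)"
        using e by (auto intro!: derivative_eq_intros)
      show "((\<lambda>t. Sf ((t - tb + e) / e)) has_real_derivative r2 x) (at x)"
        using DERIV_chain2[OF Sf_deriv a] by (simp add: r2_def)
    qed
    from ftc_real[OF _ this, of ta tb] t
    have "integral {ta..tb} r2 = Sf ((tb - tb + e) / e) - Sf ((ta - tb + e) / e)" by simp
    moreover have "Sf ((tb - tb + e) / e) = 1" using e by (intro Sf_right) simp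
    moreover have "Sf ((ta - tb + e) / e) = 0" using e by (intro Sf_left) (simp add: divide_le_0_iff)
    ultimately show ?thesis by simp
  qed
  have B1: "norm (integral {ta..tb} (\<lambda>t. (E t - E ta) * r1 t)) \<le> integral {ta..tb} (\<lambda>t. \<delta> * r1 t)"
  proof (rule integral_norm_bound_integral[OF intE1])
    show "(\<lambda>t. \<delta> * r1 t) integrable_on {ta..tb}" using integrable_on_mult_left[OF int1, of \<delta>] by (simp add: mult.commute)
    fix t assume tin: "t \<in> {ta..tb}"
    show "norm ((E t - E ta) * r1 t) \<le> \<delta> * r1 t"
    proof (cases "t - ta < d1")
      case True
      then have "\<bar>E t - E ta\<bar> < \<delta>" using d1(2)[OF tin] tin by (simp add: dist_real_def)
      then show ?thesis using r1_nn[of t] by (simp add: abs_mult mult_right_mono)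
    next
      case False
      then have "1 \<le> (t - ta) / e" using e by (simp add: le_divide_eq)
      then have "r1 t = 0" using bump_zero by (simp add: r1_def)
      then show ?thesis by simp
    qed
  qed
  have B2: "norm (integral {ta..tb} (\<lambda>t. (E t - E tb) * r2 t)) \<le> integral {ta..tb} (\<lambda>t. \<delta> * r2 t)"
  proof (rule integral_norm_bound_integral[OF intE2])
    show "(\<lambda>t. \<delta> * r2 t) integrable_on {ta..tb}" using integrable_on_mult_left[OF int2, of \<delta>] by (simp add: mult.commute)
    fix t assume tin: "t \<in> {ta..tb}"
    show "norm ((E t - E tb) * r2 t) \<le> \<delta> * r2 t"
    proof (cases "tb - t < d2")
      case True
      then have "\<bar>E t - E tb\<bar> < \<delta>" using d2(2)[OF tin] tin by (simp add: dist_real_def)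
      then show ?thesis using r2_nn[of t] by (simp add: abs_mult mult_right_mono)
    next
      case False
      then have "(t - tb + e) / e \<le> 0" using e by (simp add: divide_le_0_iff)
      then have "r2 t = 0" using bump_zero by (simp add: r2_def)
      then show ?thesis by simp
    qed
  qed
  have "integral {ta..tb} (\<lambda>t. \<delta> * r1 t) = \<delta>" using I1 by simp
  moreover have "integral {ta..tb} (\<lambda>t. \<delta> * r2 t) = \<delta>" using I2 by simp
  moreover have "integral {ta..tb} (\<lambda>t. E t * dtheta ta tb e t)
      = integral {ta..tb} (\<lambda>t. (E t - E ta) * r1 t) + E ta * integral {ta..tb} r1
        - (integral {ta..tb} (\<lambda>t. (E t - E tb) * r2 t) + E tb * integral {ta..tb} r2)"
  proof -
    have "integral {ta..tb} (\<lambda>t. E t * dtheta ta tb e t)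
        = integral {ta..tb} (\<lambda>t. ((E t - E ta) * r1 t + E ta * r1 t) - ((E t - E tb) * r2 t + E tb * r2 t))"
      by (simp add: dth algebra_simps)
    also have "\<dots> = integral {ta..tb} (\<lambda>t. (E t - E ta) * r1 t + E ta * r1 t) - integral {ta..tb} (\<lambda>t. (E t - E tb) * r2 t + E tb * r2 t)"
      by (rule integral_diff) (use intE1 intE2 intc1 intc2 in \<open>auto intro!: integrable_add\<close>)
    also have "\<dots> = (integral {ta..tb} (\<lambda>t. (E t - E ta) * r1 t) + E ta * integral {ta..tb} r1)
         - (integral {ta..tb} (\<lambda>t. (E t - E tb) * r2 t) + E tb * integral {ta..tb} r2)"
      by (subst integral_add, use intE1 intc1 in auto, subst integral_add, use intE2 intc2 in auto)
    finally show ?thesis .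
  qed
  ultimately have "integral {ta..tb} (\<lambda>t. E t * dtheta ta tb e t) \<le> E ta - E tb + 2 * \<delta>"
    using B1 B2 I1 I2 by simp
  moreover have "0 \<le> integral {ta..tb} (\<lambda>t. E t * dtheta ta tb e t)" using H e by simp
  ultimately show False using \<delta> unfolding \<delta>_def by (auto simp: field_simps)
qed

abbreviation RL :: "real measure" where "RL \<equiv> restrict_space lborel {0<..}"

lemma sigma_finite_RL: "sigma_finite_measure RL"
  by (rule sigma_finite_measure_restrict_space) (auto intro: sigma_finite_lborel)

lemma pair_sf_RL: "prob_space M \<Longrightarrow> pair_sigma_finite RL M"
  unfolding pair_sigma_finite_def using sigma_finite_RL prob_space_imp_sigma_finite by blast

lemma AE_lborel_exists:
  assumes "AE x in lborel. P x" "a < (b::real)"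
  shows "\<exists>x. a < x \<and> x < b \<and> P x"
proof (rule ccontr)
  assume n: "\<not> (\<exists>x. a < x \<and> x < b \<and> P x)"
  obtain N where N0: "{x \<in> space lborel. \<not> P x} \<subseteq> N" "emeasure lborel N = 0" "N \<in> sets lborel"
    using assms(1) by (rule AE_E)
  then have N: "{x \<in> space lborel. \<not> P x} \<subseteq> N" "N \<in> null_sets lborel" by auto
  have "{a<..<b} \<subseteq> N" using N(1) n by auto
  then have "emeasure lborel {a<..<b} \<le> emeasure lborel N"
    using N(2) by (intro emeasure_mono) auto
  also have "\<dots> = 0" using N(2) by auto
  finally show False using assms(2) by simp
qed

lemma pointwise_bound:
  fixes M :: "'a measure" and u :: "real \<Rightarrow> 'a \<Rightarrow> real"
  assumes P: "prob_space M"
    and bd: "AE p in (RL \<Otimes>\<^sub>M M). \<bar>u (fst p) (snd p)\<bar> \<le> C"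
    and int: "\<And>t. 0 \<le> t \<Longrightarrow> integrable M (u t)"
    and cont: "\<And>s. 0 \<le> s \<Longrightarrow> ((\<lambda>t. \<integral>\<omega>. \<bar>u t \<omega> - u s \<omega>\<bar> \<partial>M) \<longlongrightarrow> 0) (at s within {0..})"
    and s: "0 \<le> s"
  shows "AE \<omega> in M. \<bar>u s \<omega>\<bar> \<le> C"
proof -
  interpret prob_space M by (rule P)
  interpret pair_sigma_finite RL M by (rule pair_sf_RL[OF P])
  have "AE t in RL. AE \<omega> in M. \<bar>u t \<omega>\<bar> \<le> C"
    using AE_pair[OF bd] by simp
  then have good: "AE t in lborel. t \<in> {0<..} \<longrightarrow> (AE \<omega> in M. \<bar>u t \<omega>\<bar> \<le> C)"
    by (subst (asm) AE_restrict_space_iff) auto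
  define Lf where "Lf \<omega> = max (\<bar>u s \<omega>\<bar> - C) 0" for \<omega>
  have ms: "u s \<in> borel_measurable M" using int[OF s] by auto
  have intLf: "integrable M Lf"
  proof (rule Bochner_Integration.integrable_bound)
    show "integrable M (\<lambda>\<omega>. \<bar>u s \<omega>\<bar> + \<bar>C\<bar>)" using int[OF s] by auto
    show "Lf \<in> borel_measurable M" unfolding Lf_def using ms by measurable
    show "AE \<omega> in M. norm (Lf \<omega>) \<le> norm (\<bar>u s \<omega>\<bar> + \<bar>C\<bar>)" by (auto simp: Lf_def)
  qed
  have Lnn: "0 \<le> integral\<^sup>L M Lf" by (rule Bochner_Integration.integral_nonneg) (simp add: Lf_def)
  have le: "integral\<^sup>L M Lf \<le> (\<integral>\<omega>. \<bar>u t \<omega> - u s \<omega>\<bar> \<partial>M)"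
    if t: "0 < t" "AE \<omega> in M. \<bar>u t \<omega>\<bar> \<le> C" for t
  proof (rule integral_mono_AE[OF intLf])
    show "integrable M (\<lambda>\<omega>. \<bar>u t \<omega> - u s \<omega>\<bar>)" using int[OF s] int[of t] t by auto
    show "AE \<omega> in M. Lf \<omega> \<le> \<bar>u t \<omega> - u s \<omega>\<bar>"
      using t(2) by eventually_elim (auto simp: Lf_def)
  qed
  have "integral\<^sup>L M Lf \<le> 0"
  proof (rule ccontr)
    assume "\<not> integral\<^sup>L M Lf \<le> 0"
    then have pos: "0 < integral\<^sup>L M Lf" by simp
    have "\<forall>\<^sub>F t in at s within {0..}. (\<integral>\<omega>. \<bar>u t \<omega> - u s \<omega>\<bar> \<partial>M) < integral\<^sup>L M Lf"
      by (rule order_tendstoD(2)[OF cont[OF s] pos])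
    then obtain d where d: "0 < d" "\<And>t. t \<in> {0..} \<Longrightarrow> t \<noteq> s \<Longrightarrow> dist t s < d \<Longrightarrow>
        (\<integral>\<omega>. \<bar>u t \<omega> - u s \<omega>\<bar> \<partial>M) < integral\<^sup>L M Lf"
      unfolding eventually_at by blast
    obtain t where t: "s < t" "t < s + d" "t \<in> {0<..} \<longrightarrow> (AE \<omega> in M. \<bar>u t \<omega>\<bar> \<le> C)"
      using AE_lborel_exists[OF good, of s "s + d"] d(1) by auto
    have "0 < t" using t s by simp
    with t have "AE \<omega> in M. \<bar>u t \<omega>\<bar> \<le> C" by simp
    from le[OF \<open>0 < t\<close> this] d(2)[of t] t s show False by (simp add: dist_real_def)
  qed
  with Lnn have "integral\<^sup>L M Lf = 0" by simp
  then have "AE \<omega> in M. Lf \<omega> = 0"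
    using integral_nonneg_eq_0_iff_AE[OF intLf] by (simp add: Lf_def)
  then show ?thesis by eventually_elim (auto simp: Lf_def)
qed

lemma energy_cont:
  fixes M :: "'a measure" and u :: "real \<Rightarrow> 'a \<Rightarrow> real"
  assumes P: "prob_space M"
    and bd: "\<And>s. 0 \<le> s \<Longrightarrow> AE \<omega> in M. \<bar>u s \<omega>\<bar> \<le> C"
    and int: "\<And>t. 0 \<le> t \<Longrightarrow> integrable M (u t)"
    and cont: "\<And>s. 0 \<le> s \<Longrightarrow> ((\<lambda>t. \<integral>\<omega>. \<bar>u t \<omega> - u s \<omega>\<bar> \<partial>M) \<longlongrightarrow> 0) (at s within {0..})"
  shows "continuous_on {0..} (\<lambda>t. \<integral>\<omega>. (u t \<omega>)\<^sup>2 \<partial>M)"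
  unfolding continuous_on_def
proof (intro ballI)
  interpret prob_space M by (rule P)
  fix s :: real assume "s \<in> {0..}"
  then have s: "0 \<le> s" by simp
  define E where "E t = (\<integral>\<omega>. (u t \<omega>)\<^sup>2 \<partial>M)" for t
  have int2: "integrable M (\<lambda>\<omega>. (u t \<omega>)\<^sup>2)" if "0 \<le> t" for t
  proof (rule Bochner_Integration.integrable_bound)
    show "integrable M (\<lambda>\<omega>. C\<^sup>2)" by simp
    show "(\<lambda>\<omega>. (u t \<omega>)\<^sup>2) \<in> borel_measurable M" using int[OF that] by auto
    show "AE \<omega> in M. norm ((u t \<omega>)\<^sup>2) \<le> norm (C\<^sup>2)"
      using bd[OF that]
    proof eventually_elim
      case (elim \<omega>)
      have "\<bar>u t \<omega>\<bar>\<^sup>2 \<le> C\<^sup>2" by (rule power_mono) (use elim in auto)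
      then show ?case by simp
    qed
  qed
  have est: "\<bar>E t - E s\<bar> \<le> 2 * \<bar>C\<bar> * (\<integral>\<omega>. \<bar>u t \<omega> - u s \<omega>\<bar> \<partial>M)" if t: "0 \<le> t" for t
  proof -
    have "E t - E s = (\<integral>\<omega>. (u t \<omega>)\<^sup>2 - (u s \<omega>)\<^sup>2 \<partial>M)"
      unfolding E_def using int2[OF t] int2[OF s] by simp
    then have "\<bar>E t - E s\<bar> \<le> (\<integral>\<omega>. \<bar>(u t \<omega>)\<^sup>2 - (u s \<omega>)\<^sup>2\<bar> \<partial>M)"
      using integral_abs_bound by metis
    also have "\<dots> \<le> (\<integral>\<omega>. 2 * \<bar>C\<bar> * \<bar>u t \<omega> - u s \<omega>\<bar> \<partial>M)"
    proof (rule integral_mono_AE)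
      show "integrable M (\<lambda>\<omega>. \<bar>(u t \<omega>)\<^sup>2 - (u s \<omega>)\<^sup>2\<bar>)" using int2[OF t] int2[OF s] by auto
      show "integrable M (\<lambda>\<omega>. 2 * \<bar>C\<bar> * \<bar>u t \<omega> - u s \<omega>\<bar>)" using int[OF t] int[OF s] by auto
      show "AE \<omega> in M. \<bar>(u t \<omega>)\<^sup>2 - (u s \<omega>)\<^sup>2\<bar> \<le> 2 * \<bar>C\<bar> * \<bar>u t \<omega> - u s \<omega>\<bar>"
        using bd[OF t] bd[OF s]
      proof eventually_elim
        case (elim \<omega>)
        have "\<bar>(u t \<omega>)\<^sup>2 - (u s \<omega>)\<^sup>2\<bar> = \<bar>u t \<omega> + u s \<omega>\<bar> * \<bar>u t \<omega> - u s \<omega>\<bar>"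
          by (simp add: power2_eq_square abs_mult[symmetric] algebra_simps)
        also have "\<dots> \<le> (2 * \<bar>C\<bar>) * \<bar>u t \<omega> - u s \<omega>\<bar>"
          using elim by (intro mult_right_mono) auto
        finally show ?case by simp
      qed
    qed
    also have "\<dots> = 2 * \<bar>C\<bar> * (\<integral>\<omega>. \<bar>u t \<omega> - u s \<omega>\<bar> \<partial>M)" by simp
    finally show ?thesis .
  qed
  have "((\<lambda>t. E t - E s) \<longlongrightarrow> 0) (at s within {0..})"
  proof (rule Lim_null_comparison)
    show "\<forall>\<^sub>F t in at s within {0..}. norm (E t - E s) \<le> 2 * \<bar>C\<bar> * (\<integral>\<omega>. \<bar>u t \<omega> - u s \<omega>\<bar> \<partial>M)"
      unfolding eventually_at_filter using est by (auto intro!: always_eventually)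
    show "((\<lambda>t. 2 * \<bar>C\<bar> * (\<integral>\<omega>. \<bar>u t \<omega> - u s \<omega>\<bar> \<partial>M)) \<longlongrightarrow> 0) (at s within {0..})"
      using tendsto_mult_right_zero[OF cont[OF s], of "2 * \<bar>C\<bar>"] by simp
  qed
  then have "((\<lambda>t. (E t - E s) + E s) \<longlongrightarrow> 0 + E s) (at s within {0..})"
    by (intro tendsto_add tendsto_const)
  then show "((\<lambda>t. \<integral>\<omega>. (u t \<omega>)\<^sup>2 \<partial>M) \<longlongrightarrow> (\<integral>\<omega>. (u s \<omega>)\<^sup>2 \<partial>M)) (at s within {0..})"
    by (simp add: E_def)
qed

lemma bounded_supp:
  fixes h :: "real \<Rightarrow> real"
  assumes "continuous_on UNIV h" "\<And>t. h t \<noteq> 0 \<Longrightarrow> a \<le> t \<and> t \<le> b"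
  shows "\<exists>B. \<forall>t. \<bar>h t\<bar> \<le> B"
proof -
  have "compact (h ` {a..b})"
    by (rule compact_continuous_image[OF continuous_on_subset[OF assms(1) subset_UNIV]]) simp
  then obtain B where B: "\<And>y. y \<in> h ` {a..b} \<Longrightarrow> norm y \<le> B"
    using compact_imp_bounded bounded_iff by metis
  have "\<bar>h t\<bar> \<le> max B 0" for t
  proof (cases "h t = 0")
    case False
    then have "t \<in> {a..b}" using assms(2) by auto
    then show ?thesis using B[of "h t"] by auto
  qed simp
  then show ?thesis by blast
qed

lemma deriv_supp:
  fixes h :: "real \<Rightarrow> real"
  assumes "\<And>t. h t \<noteq> 0 \<Longrightarrow> a \<le> t \<and> t \<le> b" "deriv h t \<noteq> 0"
  shows "a \<le> t \<and> t \<le> b"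
proof (rule ccontr)
  assume n: "\<not> (a \<le> t \<and> t \<le> b)"
  have "(h has_real_derivative 0) (at t)"
  proof (cases "t < a")
    case True
    have "((\<lambda>_. 0) has_real_derivative 0) (at t)" by simp
    then show ?thesis
      by (rule has_field_derivative_transform_within_open[of _ _ _ "{..<a}"]) (use True assms(1) in force)+
  next
    case False
    then have "b < t" using n by simp
    have "((\<lambda>_. 0) has_real_derivative 0) (at t)" by simp
    then show ?thesis
      by (rule has_field_derivative_transform_within_open[of _ _ _ "{b<..}"]) (use \<open>b < t\<close> assms(1) in force)+
  qed
  then have "deriv h t = 0" by (rule DERIV_imp_deriv)
  with assms(2) show False by simp
qed

lemma cont_borel_RL: "continuous_on UNIV h \<Longrightarrow> (h :: real \<Rightarrow> real) \<in> borel_measurable RL"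
  by (rule measurable_restrict_space1) (simp add: borel_measurable_continuous_onI)

lemma weak_energy:
  fixes M :: "'n::finite bohr measure"
    and f :: "'n \<Rightarrow> real \<Rightarrow> real"
    and A :: "'n \<Rightarrow> 'n \<Rightarrow> real \<Rightarrow> real"
    and \<sigma> :: "'n \<Rightarrow> 'k::finite \<Rightarrow> real \<Rightarrow> real"
    and u0 :: "'n bohr \<Rightarrow> real"
    and u :: "real \<Rightarrow> 'n bohr \<Rightarrow> real"
    and \<theta> :: "real \<Rightarrow> real"
  assumes haar: "bohr_haar M"
    and f_smooth: "\<And>i. smooth_real (f i)"
    and A_smooth: "\<And>i j. smooth_real (A i j)"
    and entropy: "entropy_solution M f A \<sigma> u0 u"
    and sm: "smooth_real \<theta>" and nn: "\<And>t. 0 \<le> \<theta> t" and a: "0 < a" and ab: "a \<le> b"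
    and supp: "\<And>t. \<theta> t \<noteq> 0 \<Longrightarrow> a \<le> t \<and> t \<le> b"
    and bdC: "AE p in ST M. \<bar>u (fst p) (snd p)\<bar> \<le> C"
    and Econt: "continuous_on {a..b} (\<lambda>t. \<integral>\<omega>. (u t \<omega>)\<^sup>2 \<partial>M)"
  shows "0 \<le> integral {a..b} (\<lambda>t. (\<integral>\<omega>. (u t \<omega>)\<^sup>2 \<partial>M) * deriv \<theta> t)"
proof -
  have P: "prob_space M" and spM: "space M = UNIV" using haar by (auto simp: bohr_haar_def)
  interpret prob_space M by (rule P)
  interpret pair_sigma_finite RL M by (rule pair_sf_RL[OF P])
  obtain g :: "'k \<Rightarrow> real \<Rightarrow> 'n bohr \<Rightarrow> real" where
    g1: "\<forall>k. (\<lambda>(t, \<omega>). g k t \<omega>) \<in> borel_measurable (ST M) \<and>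
            integrable (ST M) (\<lambda>(t, \<omega>). (g k t \<omega>)\<^sup>2)" and
    g3: "\<forall>(\<eta> :: real \<Rightarrow> real) \<eta>1 \<eta>2 (q :: 'n \<Rightarrow> real \<Rightarrow> real) (r :: 'n \<Rightarrow> 'n \<Rightarrow> real \<Rightarrow> real) \<phi>.
          convex_on UNIV \<eta> \<longrightarrow>
          (\<forall>v. (\<eta> has_real_derivative \<eta>1 v) (at v)) \<longrightarrow>
          (\<forall>v. (\<eta>1 has_real_derivative \<eta>2 v) (at v)) \<longrightarrow>
          continuous_on UNIV \<eta>2 \<longrightarrow>
          (\<forall>i v. (q i has_real_derivative \<eta>1 v * deriv (f i) v) (at v)) \<longrightarrow>
          (\<forall>i j v. (r i j has_real_derivative \<eta>1 v * deriv (A i j) v) (at v)) \<longrightarrow>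
          test_fun \<phi> \<longrightarrow> (\<forall>t \<omega>. 0 \<le> \<phi> t \<omega>) \<longrightarrow>
          0 \<le> (\<integral>p. (let t = fst p; \<omega> = snd p; w = u t \<omega> in
                   \<eta> w * iter_pderiv [None] \<phi> t \<omega>
                 + (\<Sum>i\<in>UNIV. q i w * iter_pderiv [Some i] \<phi> t \<omega>)
                 + (\<Sum>i\<in>UNIV. \<Sum>j\<in>UNIV. r i j w * iter_pderiv [Some i, Some j] \<phi> t \<omega>)
                 - \<eta>2 w * (\<Sum>k\<in>UNIV. (g k t \<omega>)\<^sup>2) * \<phi> t \<omega>) \<partial>ST M)"
    using entropy unfolding entropy_solution_def by blast
  define \<phi> where "\<phi> = (\<lambda>t (\<omega>::'n bohr). \<theta> t)"
  have tf: "test_fun \<phi>" unfolding \<phi>_def by (rule test_fun_time[OF sm a supp])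
  define q where "q i = (SOME Q. \<forall>v. (Q has_real_derivative 2 * v * deriv (f i) v) (at v))" for i
  define r where "r i j = (SOME Q. \<forall>v. (Q has_real_derivative 2 * v * deriv (A i j) v) (at v))" for i j
  have q: "(q i has_real_derivative 2 * v * deriv (f i) v) (at v)" for i v
  proof -
    have "\<exists>Q. \<forall>v. (Q has_real_derivative 2 * v * deriv (f i) v) (at v)"
      by (rule antideriv_exists) (intro continuous_intros smooth_cont[OF smooth_deriv[OF f_smooth]])
    from someI_ex[OF this] show ?thesis unfolding q_def by blast
  qed
  have r: "(r i j has_real_derivative 2 * v * deriv (A i j) v) (at v)" for i j v
  proof -
    have "\<exists>Q. \<forall>v. (Q has_real_derivative 2 * v * deriv (A i j) v) (at v)"
      by (rule antideriv_exists) (intro continuous_intros smooth_cont[OF smooth_deriv[OF A_smooth]])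
    from someI_ex[OF this] show ?thesis unfolding r_def by blast
  qed
  have it1: "iter_pderiv [None] \<phi> = (\<lambda>t \<omega>. deriv \<theta> t)"
  proof (intro ext)
    fix t and \<omega> :: "'n bohr"
    have "deriv (\<lambda>s. \<theta> (t + s)) 0 = deriv \<theta> t"
    proof (rule DERIV_imp_deriv)
      have "(\<theta> has_real_derivative deriv \<theta> t) (at (0 + t))" using smooth_DERIV[OF sm] by simp
      then show "((\<lambda>s. \<theta> (t + s)) has_real_derivative deriv \<theta> t) (at 0)"
        unfolding DERIV_shift by (simp add: add.commute)
    qed
    then show "iter_pderiv [None] \<phi> t \<omega> = deriv \<theta> t"
      by (simp add: \<phi>_def pderiv_dir_def dir_fun_def)
  qed
  have it2: "iter_pderiv [Some i] \<phi> = (\<lambda>t \<omega>. 0)" for i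
    by (intro ext) (simp add: \<phi>_def pderiv_dir_def dir_fun_def)
  have it3: "iter_pderiv [Some i, Some j] \<phi> = (\<lambda>t \<omega>. 0)" for i j
    by (intro ext) (simp add: it2[unfolded \<phi>_def] \<phi>_def pderiv_dir_def dir_fun_def)
  have conv: "convex_on UNIV (\<lambda>v::real. v ^ 2)" by (rule convex_power_even) simp
  have ineq: "0 \<le> (\<integral>p. (let t = fst p; \<omega> = snd p; w = u t \<omega> in
                   w ^ 2 * iter_pderiv [None] \<phi> t \<omega>
                 + (\<Sum>i\<in>UNIV. q i w * iter_pderiv [Some i] \<phi> t \<omega>)
                 + (\<Sum>i\<in>UNIV. \<Sum>j\<in>UNIV. r i j w * iter_pderiv [Some i, Some j] \<phi> t \<omega>)
                 - 2 * (\<Sum>k\<in>UNIV. (g k t \<omega>)\<^sup>2) * \<phi> t \<omega>) \<partial>ST M)"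
    apply (rule g3[rule_format, of "\<lambda>v. v ^ 2" "\<lambda>v. 2 * v" "\<lambda>v. 2" q r \<phi>])
    apply (rule conv)
    apply (auto intro!: derivative_eq_intros q r tf[unfolded \<phi>_def] simp: \<phi>_def nn)
    done
  define X where "X p = (u (fst p) (snd p))\<^sup>2 * deriv \<theta> (fst p)" for p :: "real \<times> 'n bohr"
  define Y where "Y p = 2 * (\<Sum>k\<in>UNIV. (g k (fst p) (snd p))\<^sup>2) * \<theta> (fst p)" for p :: "real \<times> 'n bohr"
  have ineq2: "0 \<le> (\<integral>p. X p - Y p \<partial>ST M)"
    using ineq[unfolded it1 it2 it3] by (simp add: Let_def X_def Y_def \<phi>_def)
  have Sdef: "ST M = RL \<Otimes>\<^sub>M M" by (simp add: ST_def)
  have ds: "\<And>t. deriv \<theta> t \<noteq> 0 \<Longrightarrow> a \<le> t \<and> t \<le> b" using deriv_supp[of \<theta> a b] supp by blast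
  obtain Bd where Bd: "\<And>t. \<bar>deriv \<theta> t\<bar> \<le> Bd"
    using bounded_supp[OF smooth_cont[OF smooth_deriv[OF sm]] ds] by blast
  obtain Bt where Bt: "\<And>t. \<bar>\<theta> t\<bar> \<le> Bt"
    using bounded_supp[OF smooth_cont[OF sm] supp] by blast
  have dsupp: "deriv \<theta> t = 0" if "t \<notin> {a..b}" for t using ds[of t] that by auto
  have mU: "(\<lambda>p. u (fst p) (snd p)) \<in> borel_measurable (RL \<Otimes>\<^sub>M M)"
    using entropy unfolding entropy_solution_def ST_def by (simp add: case_prod_beta')
  have m\<theta>: "(\<lambda>p. \<theta> (fst p)) \<in> borel_measurable (RL \<Otimes>\<^sub>M M)"
    by (rule measurable_compose[OF measurable_fst cont_borel_RL[OF smooth_cont[OF sm]]])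
  have md\<theta>: "(\<lambda>p. deriv \<theta> (fst p)) \<in> borel_measurable (RL \<Otimes>\<^sub>M M)"
    by (rule measurable_compose[OF measurable_fst cont_borel_RL[OF smooth_cont[OF smooth_deriv[OF sm]]]])
  have mg: "(\<lambda>p. g k (fst p) (snd p)) \<in> borel_measurable (RL \<Otimes>\<^sub>M M)" for k
    using g1 unfolding ST_def by (simp add: case_prod_beta')
  have ig: "integrable (RL \<Otimes>\<^sub>M M) (\<lambda>p. (g k (fst p) (snd p))\<^sup>2)" for k
    using g1 unfolding ST_def by (simp add: case_prod_beta')
  have abRL: "{a..b} \<in> sets RL" using a by (subst sets_restrict_space_iff) auto
  have rect: "{a..b} \<times> UNIV \<in> sets (RL \<Otimes>\<^sub>M M)"
    using abRL sets.top[of M] spM by (intro pair_measureI) auto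
  have "emeasure (RL \<Otimes>\<^sub>M M) ({a..b} \<times> UNIV) = emeasure RL {a..b} * emeasure M UNIV"
    using abRL sets.top[of M] spM by (intro sigma_finite_measure.emeasure_pair_measure_Times[OF prob_space_imp_sigma_finite[OF P]]) auto
  also have "\<dots> = ennreal (b - a)"
    using a ab emeasure_space_1 spM by (subst emeasure_restrict_space) auto
  finally have mrect: "emeasure (RL \<Otimes>\<^sub>M M) ({a..b} \<times> UNIV) < \<infinity>" by simp
  have intX: "integrable (RL \<Otimes>\<^sub>M M) X"
  proof (rule Bochner_Integration.integrable_bound)
    show "integrable (RL \<Otimes>\<^sub>M M) (\<lambda>p. C\<^sup>2 * Bd * indicator ({a..b} \<times> UNIV) p)"
      using rect mrect by (intro integrable_mult_right) simp
    show "X \<in> borel_measurable (RL \<Otimes>\<^sub>M M)" unfolding X_def using mU md\<theta> by measurable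
    show "AE p in RL \<Otimes>\<^sub>M M. norm (X p) \<le> norm (C\<^sup>2 * Bd * indicator ({a..b} \<times> UNIV) p)"
      using bdC unfolding Sdef
    proof eventually_elim
      case (elim p)
      have u2: "(u (fst p) (snd p))\<^sup>2 \<le> C\<^sup>2"
        using power_mono[OF elim, of 2] by simp
      have B0: "0 \<le> Bd" using Bd[of 0] by simp
      show ?case
      proof (cases "fst p \<in> {a..b}")
        case True
        then have ind: "indicator ({a..b} \<times> UNIV) p = (1::real)"
          by (cases p) (auto simp: indicator_def)
        have "\<bar>X p\<bar> = (u (fst p) (snd p))\<^sup>2 * \<bar>deriv \<theta> (fst p)\<bar>" by (simp add: X_def abs_mult)
        also have "\<dots> \<le> C\<^sup>2 * Bd" using u2 Bd B0 by (intro mult_mono) auto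
        finally show ?thesis using ind B0 by simp
      next
        case False
        then show ?thesis using dsupp[of "fst p"] by (simp add: X_def)
      qed
    qed
  qed
  have intY: "integrable (RL \<Otimes>\<^sub>M M) Y"
  proof (rule Bochner_Integration.integrable_bound)
    show "integrable (RL \<Otimes>\<^sub>M M) (\<lambda>p. 2 * Bt * (\<Sum>k\<in>UNIV. (g k (fst p) (snd p))\<^sup>2))"
      using ig by (intro integrable_mult_right integrable_sum) auto
    show "Y \<in> borel_measurable (RL \<Otimes>\<^sub>M M)" unfolding Y_def using mg m\<theta> by measurable
    show "AE p in RL \<Otimes>\<^sub>M M. norm (Y p) \<le> norm (2 * Bt * (\<Sum>k\<in>UNIV. (g k (fst p) (snd p))\<^sup>2))"
    proof (rule AE_I2)
      fix p
      have S0: "0 \<le> (\<Sum>k\<in>UNIV. (g k (fst p) (snd p))\<^sup>2)" by (intro sum_nonneg) auto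
      have B0: "0 \<le> Bt" using Bt[of 0] by simp
      have "\<bar>Y p\<bar> = 2 * (\<Sum>k\<in>UNIV. (g k (fst p) (snd p))\<^sup>2) * \<bar>\<theta> (fst p)\<bar>"
        using S0 by (simp add: Y_def abs_mult)
      also have "\<dots> \<le> 2 * (\<Sum>k\<in>UNIV. (g k (fst p) (snd p))\<^sup>2) * Bt"
        using S0 Bt by (intro mult_left_mono) auto
      finally show "norm (Y p) \<le> norm (2 * Bt * (\<Sum>k\<in>UNIV. (g k (fst p) (snd p))\<^sup>2))"
        using S0 B0 by (simp add: algebra_simps)
    qed
  qed
  have Ynn: "0 \<le> integral\<^sup>L (RL \<Otimes>\<^sub>M M) Y"
    by (rule Bochner_Integration.integral_nonneg) (auto simp: Y_def nn intro!: sum_nonneg mult_nonneg_nonneg)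
  have "integral\<^sup>L (RL \<Otimes>\<^sub>M M) (\<lambda>p. X p - Y p) = integral\<^sup>L (RL \<Otimes>\<^sub>M M) X - integral\<^sup>L (RL \<Otimes>\<^sub>M M) Y"
    by (rule Bochner_Integration.integral_diff[OF intX intY])
  with ineq2 Ynn have Xnn: "0 \<le> integral\<^sup>L (RL \<Otimes>\<^sub>M M) X" unfolding Sdef by simp
  have "(\<integral>t. (\<integral>\<omega>. X (t, \<omega>) \<partial>M) \<partial>RL) = integral\<^sup>L (RL \<Otimes>\<^sub>M M) X"
    by (rule integral_fst'[OF intX])
  moreover have "(\<integral>\<omega>. X (t, \<omega>) \<partial>M) = (\<integral>\<omega>. (u t \<omega>)\<^sup>2 \<partial>M) * deriv \<theta> t" for t
    by (simp add: X_def)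
  ultimately have "0 \<le> (\<integral>t. (\<integral>\<omega>. (u t \<omega>)\<^sup>2 \<partial>M) * deriv \<theta> t \<partial>RL)" using Xnn by simp
  also have "(\<integral>t. (\<integral>\<omega>. (u t \<omega>)\<^sup>2 \<partial>M) * deriv \<theta> t \<partial>RL)
      = (\<integral>t. indicator {0<..} t *\<^sub>R ((\<integral>\<omega>. (u t \<omega>)\<^sup>2 \<partial>M) * deriv \<theta> t) \<partial>lborel)"
    by (rule integral_restrict_space) simp
  also have "\<dots> = (\<integral>t. indicator {a..b} t *\<^sub>R ((\<integral>\<omega>. (u t \<omega>)\<^sup>2 \<partial>M) * deriv \<theta> t) \<partial>lborel)"
  proof (rule Bochner_Integration.integral_cong[OF refl])
    fix t :: real
    show "indicator {0<..} t *\<^sub>R ((\<integral>\<omega>. (u t \<omega>)\<^sup>2 \<partial>M) * deriv \<theta> t)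
        = indicator {a..b} t *\<^sub>R ((\<integral>\<omega>. (u t \<omega>)\<^sup>2 \<partial>M) * deriv \<theta> t)"
    proof (cases "t \<in> {a..b}")
      case True then have "t \<in> {0<..}" using a by auto
      with True show ?thesis by (simp add: indicator_def)
    next
      case False then show ?thesis using dsupp[of t] by simp
    qed
  qed
  also have "\<dots> = integral {a..b} (\<lambda>t. (\<integral>\<omega>. (u t \<omega>)\<^sup>2 \<partial>M) * deriv \<theta> t)"
  proof -
    have c: "continuous_on {a..b} (\<lambda>t. (\<integral>\<omega>. (u t \<omega>)\<^sup>2 \<partial>M) * deriv \<theta> t)"
      by (intro continuous_on_mult Econt smooth_cont[OF smooth_deriv[OF sm]])
    show ?thesis
      using set_borel_integral_eq_integral(2)[OF borel_integrable_atLeastAtMost'[OF c]]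
      by (simp add: set_lebesgue_integral_def)
  qed
  finally show ?thesis .
qed

theorem lemma3p5:
  fixes M :: "'n::finite bohr measure"
    and f :: "'n \<Rightarrow> real \<Rightarrow> real"
    and A :: "'n \<Rightarrow> 'n \<Rightarrow> real \<Rightarrow> real"
    and \<sigma> :: "'n \<Rightarrow> 'k::finite \<Rightarrow> real \<Rightarrow> real"
    and u0 :: "'n bohr \<Rightarrow> real"
    and u :: "real \<Rightarrow> 'n bohr \<Rightarrow> real"
  assumes haar: "bohr_haar M"
    and f_smooth: "\<And>i. smooth_real (f i)"
    and A_smooth: "\<And>i j. smooth_real (A i j)"
    and A_sym: "\<And>i j v. A i j v = A j i v"
    and A_nonneg: "\<And>v (x :: real^'n). 0 \<le> (\<Sum>i\<in>UNIV. \<Sum>j\<in>UNIV. x $ i * deriv (A i j) v * x $ j)"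
    and \<sigma>_smooth: "\<And>i k. smooth_real (\<sigma> i k)"
    and a_factor: "\<And>i j v. deriv (A i j) v = (\<Sum>k\<in>UNIV. \<sigma> i k v * \<sigma> j k v)"
    and u0_meas: "u0 \<in> borel_measurable M"
    and u0_bdd: "\<exists>C. AE \<omega> in M. \<bar>u0 \<omega>\<bar> \<le> C"
    and entropy: "entropy_solution M f A \<sigma> u0 u"
    and u_meas: "\<And>t. 0 \<le> t \<Longrightarrow> integrable M (u t)"
    and u_cont: "\<And>s. 0 \<le> s \<Longrightarrow> ((\<lambda>t. \<integral>\<omega>. \<bar>u t \<omega> - u s \<omega>\<bar> \<partial>M) \<longlongrightarrow> 0) (at s within {0..})"
    and u_init: "AE \<omega> in M. u 0 \<omega> = u0 \<omega>"
  shows "\<And>t1 t2. 0 \<le> t1 \<Longrightarrow> t1 \<le> t2 \<Longrightarrow>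
           (\<integral>\<omega>. \<bar>u t2 \<omega>\<bar>\<^sup>2 \<partial>M) \<le> (\<integral>\<omega>. \<bar>u t1 \<omega>\<bar>\<^sup>2 \<partial>M)"
proof -
  fix t1 t2 :: real
  assume t1: "0 \<le> t1" and t12: "t1 \<le> t2"
  have P: "prob_space M" using haar by (auto simp: bohr_haar_def)
  obtain C where bdC: "AE p in ST M. \<bar>u (fst p) (snd p)\<bar> \<le> C"
    using entropy unfolding entropy_solution_def by blast
  have bdt: "AE \<omega> in M. \<bar>u s \<omega>\<bar> \<le> C" if "0 \<le> s" for s
    by (rule pointwise_bound[OF P bdC[unfolded ST_def] u_meas u_cont that])
  define E where "E t = (\<integral>\<omega>. (u t \<omega>)\<^sup>2 \<partial>M)" for t
  have Econt: "continuous_on {0..} E"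
    unfolding E_def by (rule energy_cont[OF P bdt u_meas u_cont])
  have key: "E b \<le> E a" if ab: "0 < a" "a < b" for a b
  proof (rule energy_mono_aux[where E=E and ta=a and tb=b])
    show "continuous_on {a..b} E" using ab by (intro continuous_on_subset[OF Econt]) auto
    show "a < b" by (rule ab(2))
    fix e :: real assume e: "0 < e" "e \<le> b - a"
    have dd: "deriv (theta a b e) t = dtheta a b e t" for t
      using e by (intro DERIV_imp_deriv theta_deriv) simp
    have "0 \<le> integral {a..b} (\<lambda>t. (\<integral>\<omega>. (u t \<omega>)\<^sup>2 \<partial>M) * deriv (theta a b e) t)"
    proof (rule weak_energy[OF haar f_smooth A_smooth entropy])
      show "smooth_real (theta a b e)" using e by (intro smooth_theta) simp
      show "\<And>t. 0 \<le> theta a b e t" using e by (intro theta_nonneg) auto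
      show "0 < a" "a \<le> b" using ab by auto
      show "\<And>t. theta a b e t \<noteq> 0 \<Longrightarrow> a \<le> t \<and> t \<le> b" using e theta_supp by blast
      show "AE p in ST M. \<bar>u (fst p) (snd p)\<bar> \<le> C" by (rule bdC)
      show "continuous_on {a..b} (\<lambda>t. \<integral>\<omega>. (u t \<omega>)\<^sup>2 \<partial>M)"
        using ab by (intro continuous_on_subset[OF Econt[unfolded E_def]]) auto
    qed
    then show "0 \<le> integral {a..b} (\<lambda>t. E t * dtheta a b e t)" by (simp add: dd E_def)
  qed
  have "E t2 \<le> E t1"
  proof (cases "t1 = t2")
    case False
    then have lt: "t1 < t2" using t12 by simp
    show ?thesis
    proof (cases "t1 = 0")
      case False
      then show ?thesis using key[of t1 t2] t1 lt by simp
    next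
      case True
      have "(E \<longlongrightarrow> E 0) (at 0 within {0..})"
        using Econt unfolding continuous_on_def by auto
      then have lim: "(E \<longlongrightarrow> E 0) (at_right 0)"
        by (rule tendsto_within_subset) auto
      have ev: "\<forall>\<^sub>F s in at_right 0. E t2 \<le> E s"
        unfolding eventually_at_right_field using lt True key[of _ t2] by blast
      have "E t2 \<le> E 0"
        by (rule tendsto_lowerbound[OF lim ev]) simp
      then show ?thesis using True by simp
    qed
  qed simp
  then show "(\<integral>\<omega>. \<bar>u t2 \<omega>\<bar>\<^sup>2 \<partial>M) \<le> (\<integral>\<omega>. \<bar>u t1 \<omega>\<bar>\<^sup>2 \<partial>M)"
    by (simp add: E_def)
qed

end
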